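(* For positive reals $\varepsilon,T$ let $\delta(\varepsilon,T):=\min\{\varepsilon/2,\ \varepsilon^3/(240T^5)\}$. Let $\Gamma\in\mathbb{R}^{p\times p}$ be a connected continuous-time interconnection, $r\in\mathbb{R}^p$ with $r^T\Gamma=0$, $r^T\mathbf 1=1$, and $\Omega$ symmetric positive definite with $(\Gamma-\mathbf 1r^T)^T\Omega+\Omega(\Gamma-\mathbf 1r^T)=-I_p$. Let $\rho(\Gamma):=\sigma_{\max}(\Omega)\max\{1,|\Gamma|^3\}$ and $V(\mathbf x):=\mathbf x^T(\Omega\otimes I_n)\mathbf x$. Then for every Riemann-integrable $Q:\mathbb{R}_{\ge0}\to\overline{\mathcal Q}_n$ with $\sigma_{\min}\big(\int_0^TQ_t\,dt\big)\ge\varepsilon$, the solution of $\dot{\mathbf x}=(\Gamma\otimes Q_t)\mathbf x$ satisfies $$V(\mathbf x(T)-\bar{\mathbf x})\le\Big(1-\frac{\delta(\varepsilon,T)}{\rho(\Gamma)}\Big)V(\mathbf x(0)-\bar{\mathbf x}),$$ where $\bar{\mathbf x}:=(\mathbf 1r^T\otimes I_n)\mathbf x(0)$.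
   Context: $|\cdot|$ Euclidean norm / induced 2-norm; $\mathbf 1$ all-ones vector; $\otimes$ Kronecker product; $\sigma_{\max},\sigma_{\min}$ largest/smallest singular values; $\mathcal Q_n$ symmetric positive semidefinite $n\times n$ matrices and $\overline{\mathcal Q}_n=\{R\in\mathcal Q_n:|R|\le1\}$. A continuous-time interconnection: $\gamma_{ij}\ge0$ ($i\ne j$), $\gamma_{ii}=-\sum_{j\ne i}\gamma_{ij}$; graph edge $(n_i,n_j)$ iff $\gamma_{ij}>0$; connected means some node is reachable by directed path from every other node. *)

theory Defs
  imports "HOL-Analysis.Analysis"
begin

text \<open>Kronecker product; the index pair (i,k) of type 'p \<times> 'n corresponds to
  the row (i-1)n+k of the usual block ordering.\<close>
definition kron :: "real^'p^'p \<Rightarrow> real^'n^'n \<Rightarrow> real^('p \<times> 'n)^('p \<times> 'n)" where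
  "kron A B = (\<chi> a b. A$(fst a)$(fst b) * B$(snd a)$(snd b))"

definition sigma_max :: "real^'n^'n \<Rightarrow> real" where
  "sigma_max M = Sup {norm (M *v v) | v. norm v = 1}"

definition sigma_min :: "real^'n^'n \<Rightarrow> real" where
  "sigma_min M = Inf {norm (M *v v) | v. norm v = 1}"

definition Qbar :: "(real^'n^'n) set" where
  "Qbar = {R. transpose R = R \<and> (\<forall>v. 0 \<le> v \<bullet> (R *v v)) \<and> sigma_max R \<le> 1}"

definition ct_interconnection :: "real^'p^'p \<Rightarrow> bool" where
  "ct_interconnection G \<longleftrightarrow>
     (\<forall>i j. i \<noteq> j \<longrightarrow> 0 \<le> G$i$j) \<and> (\<forall>i. G$i$i = - (\<Sum>j\<in>UNIV-{i}. G$i$j))"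

definition graph_edges :: "real^'p^'p \<Rightarrow> ('p \<times> 'p) set" where
  "graph_edges G = {(i,j). 0 < G$i$j}"

definition connected_interconnection :: "real^'p^'p \<Rightarrow> bool" where
  "connected_interconnection G \<longleftrightarrow> ct_interconnection G \<and>
     (\<exists>k. \<forall>i. (i,k) \<in> (graph_edges G)\<^sup>*)"

text \<open>Riemann integrability on a compact interval (uniform-mesh gauges).\<close>
definition riemann_integrable_on :: "(real \<Rightarrow> 'a::real_normed_vector) \<Rightarrow> real \<Rightarrow> real \<Rightarrow> bool" where
  "riemann_integrable_on f a b \<longleftrightarrow> (\<exists>I. \<forall>e>0. \<exists>d>0. \<forall>D.
     D tagged_division_of {a..b} \<and> (\<lambda>x. ball x d) fine D \<longrightarrow>
       norm ((\<Sum>(x,K)\<in>D. Henstock_Kurzweil_Integration.content K *\<^sub>R f x) - I) < e)"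

definition delta_eps :: "real \<Rightarrow> real \<Rightarrow> real" where
  "delta_eps e T = min (e/2) (e^3 / (240 * T^5))"

definition ones_r :: "real^'p \<Rightarrow> real^'p^'p" where
  "ones_r r = (\<chi> i j. r$j)"

end

theory Submission
  imports Defs
begin


definition blk :: "real^('p::finite \<times> 'n::finite) \<Rightarrow> 'p \<Rightarrow> real^'n" where
  "blk y i = (\<chi> k. y$(i,k))"
definition col :: "real^('p::finite \<times> 'n::finite) \<Rightarrow> 'n \<Rightarrow> real^'p" where
  "col y k = (\<chi> i. y$(i,k))"

lemma sum_pair: "(\<Sum>a\<in>(UNIV::('p::finite\<times>'n::finite) set). f a) = (\<Sum>i\<in>UNIV. \<Sum>k\<in>UNIV. f (i,k))"
  by (simp add: sum.cartesian_product)

lemma sum_pair': "(\<Sum>a\<in>(UNIV::('p::finite\<times>'n::finite) set). f a) = (\<Sum>k\<in>UNIV. \<Sum>i\<in>UNIV. f (i,k))"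
  unfolding sum_pair by (rule sum.swap)

lemma inner_blk: "(y::real^('p::finite \<times> 'n::finite)) \<bullet> z = (\<Sum>i\<in>UNIV. blk y i \<bullet> blk z i)"
  by (simp add: inner_vec_def sum_pair blk_def)

lemma inner_col: "(y::real^('p::finite \<times> 'n::finite)) \<bullet> z = (\<Sum>k\<in>UNIV. col y k \<bullet> col z k)"
  by (simp add: inner_vec_def sum_pair' col_def)

lemma blk_kron: "blk (kron A B *v y) i = (\<Sum>j\<in>UNIV. A$i$j *\<^sub>R (B *v blk y j))"
proof -
  have "\<And>k. (\<Sum>a\<in>UNIV. A $ i $ fst a * B $ k $ snd a * y $ a) = (\<Sum>j\<in>UNIV. A$i$j * (\<Sum>m\<in>UNIV. B$k$m * y$(j,m)))"
    unfolding sum_pair sum_distrib_left by (simp add: mult.assoc)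
  then show ?thesis
    unfolding vec_eq_iff blk_def kron_def matrix_vector_mult_def
    by (simp add: sum_component)
qed

lemma col_kron_I: "col (kron A (mat 1) *v y) k = A *v col y k"
proof -
  have "\<And>i. (\<Sum>m\<in>UNIV. \<Sum>j\<in>UNIV. A$i$j * (if k = m then 1 else 0) * y$(j,m)) = (\<Sum>j\<in>UNIV. A$i$j * y$(j,k))"
  proof -
    fix i
    have "(\<Sum>m\<in>UNIV. \<Sum>j\<in>UNIV. A$i$j * (if k = m then 1 else 0) * y$(j,m))
       = (\<Sum>m\<in>UNIV. if k = m then (\<Sum>j\<in>UNIV. A$i$j * y$(j,m)) else 0)"
      by (rule sum.cong) auto
    then show "?thesis i" by simp
  qed
  then show ?thesis
    by (simp add: vec_eq_iff col_def kron_def matrix_vector_mult_def sum_pair' mat_def)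
qed

lemma kron_mult: "kron A B ** kron C D = kron (A ** C) (B ** D)"
proof -
  have "\<And>a b. (\<Sum>c\<in>UNIV. A $ fst a $ fst c * B $ snd a $ snd c * (C $ fst c $ fst b * D $ snd c $ snd b))
    = (\<Sum>j\<in>UNIV. A $ fst a $ j * C $ j $ fst b) * (\<Sum>m\<in>UNIV. B $ snd a $ m * D $ m $ snd b)"
    unfolding sum_pair sum_product by (intro sum.cong refl) (simp add: mult_ac)
  then show ?thesis
    unfolding vec_eq_iff kron_def matrix_matrix_mult_def by simp
qed

lemma kron_transpose: "transpose (kron A B) = kron (transpose A) (transpose B)"
  by (simp add: vec_eq_iff kron_def transpose_def)




lemma unit_exists: "\<exists>v::real^'n::finite. norm v = 1"
  by (rule exI[of _ "axis undefined 1"]) simp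

lemma mv_bounded: "\<exists>K. \<forall>v. norm ((M::real^'n::finite^'m::finite) *v v) \<le> K * norm v"
proof -
  obtain K where "\<And>x. norm (M *v x) \<le> norm x * K"
    using bounded_linear.bounded[OF matrix_vector_mul_bounded_linear[of M]] by blast
  then show ?thesis by (metis mult.commute)
qed

lemma sigma_max_set_bdd: "bdd_above {norm ((M::real^'n::finite^'n) *v v) | v. norm v = 1}"
proof -
  obtain K where K: "\<forall>v. norm (M *v v) \<le> K * norm v" using mv_bounded by blast
  show ?thesis
  proof (rule bdd_aboveI[of _ K])
    fix x assume "x \<in> {norm (M *v v) | v. norm v = 1}"
    then obtain v where "x = norm (M *v v)" "norm v = 1" by blast
    then show "x \<le> K" using K[rule_format, of v] by simp
  qed
qed

lemma sigma_max_nonneg: "0 \<le> sigma_max (M::real^'n::finite^'n)"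
proof -
  obtain v :: "real^'n" where v: "norm v = 1" using unit_exists by blast
  have "norm (M *v v) \<le> sigma_max M"
    unfolding sigma_max_def by (rule cSup_upper) (use v sigma_max_set_bdd in auto)
  then show ?thesis by (meson norm_ge_zero order_trans)
qed

lemma sigma_max_bound: "norm ((M::real^'n::finite^'n) *v v) \<le> sigma_max M * norm v"
proof (cases "v = 0")
  case True then show ?thesis by simp
next
  case False
  let ?u = "(1 / norm v) *\<^sub>R v"
  have u: "norm ?u = 1" using False by simp
  have "norm (M *v ?u) \<le> sigma_max M"
    unfolding sigma_max_def by (rule cSup_upper) (use u sigma_max_set_bdd in auto)
  moreover have "M *v ?u = (1 / norm v) *\<^sub>R (M *v v)"
    by (simp add: matrix_vector_mult_scaleR)
  ultimately have "norm (M *v v) / norm v \<le> sigma_max M" by simp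
  then show ?thesis using False by (simp add: divide_le_eq mult.commute)
qed

lemma sigma_min_bound:
  assumes "e \<le> sigma_min (M::real^'n::finite^'n)" "norm v = 1"
  shows "e \<le> norm (M *v v)"
proof -
  have "sigma_min M \<le> norm (M *v v)"
    unfolding sigma_min_def by (rule cInf_lower) (use assms(2) in \<open>auto intro: bdd_belowI[of _ 0]\<close>)
  then show ?thesis using assms(1) by linarith
qed

lemma transpose_bound: "norm (transpose (M::real^'n::finite^'n) *v v) \<le> sigma_max M * norm v"
proof -
  let ?w = "transpose M *v v"
  have "norm ?w ^ 2 = ?w \<bullet> ?w" by (simp add: power2_norm_eq_inner)
  also have "\<dots> = v \<bullet> (M *v ?w)"
    by (metis dot_lmul_matrix transpose_matrix_vector)
  also have "\<dots> \<le> norm v * norm (M *v ?w)" by (rule norm_cauchy_schwarz)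
  also have "\<dots> \<le> norm v * (sigma_max M * norm ?w)"
    by (simp add: mult_left_mono sigma_max_bound)
  finally have h: "norm ?w ^ 2 \<le> (sigma_max M * norm v) * norm ?w" by (simp add: mult_ac)
  show ?thesis
  proof (cases "norm ?w = 0")
    case True then show ?thesis by (metis mult_nonneg_nonneg sigma_max_nonneg norm_ge_zero)
  next
    case False
    then have "0 < norm ?w" by simp
    with h show ?thesis by (simp add: power2_eq_square)
  qed
qed

lemma norm_sq_col: "norm (y::real^('p::finite\<times>'n::finite)) ^ 2 = (\<Sum>k\<in>UNIV. norm (col y k) ^ 2)"
  by (simp add: power2_norm_eq_inner inner_col[of y y])

lemma norm_sq_blk: "norm (y::real^('p::finite\<times>'n::finite)) ^ 2 = (\<Sum>i\<in>UNIV. norm (blk y i) ^ 2)"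
  by (simp add: power2_norm_eq_inner inner_blk[of y y])

lemma kron_I_left_bound:
  assumes "\<And>v. norm (A *v v) \<le> c * norm v" "0 \<le> c"
  shows "norm (kron A (mat 1) *v (y::real^('p::finite\<times>'n::finite))) \<le> c * norm y"
proof -
  have "norm (kron A (mat 1) *v y) ^ 2 = (\<Sum>k\<in>UNIV. norm (A *v col y k) ^ 2)"
    by (simp add: norm_sq_col col_kron_I)
  also have "\<dots> \<le> (\<Sum>k\<in>UNIV. (c * norm (col y k)) ^ 2)"
    by (intro sum_mono power_mono assms) simp
  also have "\<dots> = (c * norm y) ^ 2"
    by (simp add: power_mult_distrib norm_sq_col[of y] sum_distrib_left)
  finally show ?thesis by (rule power2_le_imp_le) (simp add: assms)
qed

lemma blk_kron_I: "blk (kron (mat 1) B *v y) i = B *v blk y i"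
proof -
  have "(\<Sum>j\<in>UNIV. (mat 1)$i$j *\<^sub>R (B *v blk y j)) = (\<Sum>j\<in>UNIV. if i = j then B *v blk y j else 0)"
    by (rule sum.cong) (auto simp: mat_def)
  then show ?thesis by (simp add: blk_kron)
qed

lemma kron_I_right_bound:
  assumes "\<And>v. norm (B *v v) \<le> c * norm v" "0 \<le> c"
  shows "norm (kron (mat 1) B *v (y::real^('p::finite\<times>'n::finite))) \<le> c * norm y"
proof -
  have "norm (kron (mat 1) B *v y) ^ 2 = (\<Sum>i\<in>UNIV. norm (B *v blk y i) ^ 2)"
    by (simp add: norm_sq_blk blk_kron_I)
  also have "\<dots> \<le> (\<Sum>i\<in>UNIV. (c * norm (blk y i)) ^ 2)"
    by (intro sum_mono power_mono assms) simp
  also have "\<dots> = (c * norm y) ^ 2"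
    by (simp add: power_mult_distrib norm_sq_blk[of y] sum_distrib_left)
  finally show ?thesis by (rule power2_le_imp_le) (simp add: assms)
qed

lemma Qbar_D:
  assumes "Q \<in> Qbar"
  shows "transpose Q = Q" "0 \<le> v \<bullet> (Q *v v)" "norm (Q *v v) \<le> norm v"
proof -
  show "transpose Q = Q" "0 \<le> v \<bullet> (Q *v v)" using assms by (auto simp: Qbar_def)
  have "sigma_max Q \<le> 1" using assms by (auto simp: Qbar_def)
  then show "norm (Q *v v) \<le> norm v"
    using sigma_max_bound[of Q v] by (meson mult_right_mono norm_ge_zero order_trans mult_left_le_one_le sigma_max_nonneg)
qed




definition phi :: "real^'n::finite^'n \<Rightarrow> real^('p::finite\<times>'n) \<Rightarrow> real^('p\<times>'n) \<Rightarrow> real" where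
  "phi M u v = u \<bullet> (kron (mat 1) M *v v)"

lemma phi_blk: "phi M u v = (\<Sum>i\<in>UNIV. blk u i \<bullet> (M *v blk v i))"
  by (simp add: phi_def inner_blk[of u] blk_kron_I)

lemma inner_sym_mat: "transpose M = M \<Longrightarrow> (x::real^'n::finite) \<bullet> (M *v y) = y \<bullet> (M *v x)"
  by (metis dot_lmul_matrix inner_commute transpose_matrix_vector)

lemma phi_sym: "transpose M = M \<Longrightarrow> phi M u v = phi M v u"
  unfolding phi_blk by (rule sum.cong) (auto intro: inner_sym_mat)

lemma phi_add_left: "phi M (u + v) w = phi M u w + phi M v w"
  by (simp add: phi_def inner_add_left)
lemma phi_add_right: "phi M u (v + w) = phi M u v + phi M u w"
  by (simp add: phi_def inner_add_right matrix_vector_right_distrib)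
lemma phi_diff_left: "phi M (u - v) w = phi M u w - phi M v w"
  by (simp add: phi_def inner_diff_left)
lemma phi_diff_right: "phi M u (v - w) = phi M u v - phi M u w"
  by (simp add: phi_def inner_diff_right matrix_vector_mult_diff_distrib)
lemma phi_scale_left: "phi M (a *\<^sub>R u) v = a * phi M u v"
  by (simp add: phi_def)
lemma phi_scale_right: "phi M u (a *\<^sub>R v) = a * phi M u v"
  by (simp add: phi_def matrix_vector_mult_scaleR)

lemma phi_nonneg: "(\<And>v. 0 \<le> v \<bullet> (M *v v)) \<Longrightarrow> 0 \<le> phi M u u"
  unfolding phi_blk by (intro sum_nonneg) auto

lemma phi_le: "(\<And>v. norm (M *v v) \<le> norm v) \<Longrightarrow> phi M u u \<le> norm u ^ 2"
proof -
  assume h: "\<And>v. norm (M *v v) \<le> norm v"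
  have "phi M u u \<le> norm u * norm (kron (mat 1) M *v u)"
    unfolding phi_def by (rule norm_cauchy_schwarz)
  also have "\<dots> \<le> norm u * (1 * norm u)"
    by (intro mult_left_mono kron_I_right_bound) (use h in auto)
  finally show ?thesis by (simp add: power2_eq_square)
qed

lemma phi_sq: "transpose M = M \<Longrightarrow> phi M (u + v) (u + v) = phi M u u + 2 * phi M u v + phi M v v"
  by (simp add: phi_add_left phi_add_right phi_sym[of M v u])

lemma phi_amgm:
  assumes "transpose M = M" "\<And>v. 0 \<le> v \<bullet> (M *v v)" "0 < m"
  shows "2 * phi M u v \<le> m * phi M u u + phi M v v / m"
proof -
  have "0 \<le> phi M (m *\<^sub>R u - v) (m *\<^sub>R u - v)" by (rule phi_nonneg) (rule assms(2))
  also have "\<dots> = m * m * phi M u u - 2 * m * phi M u v + phi M v v"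
    by (simp add: phi_diff_left phi_diff_right phi_scale_left phi_scale_right phi_sym[OF assms(1), of v u] algebra_simps)
  finally have "2 * m * phi M u v \<le> m * (m * phi M u u + phi M v v / m)"
    using assms(3) by (simp add: algebra_simps)
  then show ?thesis using assms(3) by (simp add: mult.assoc)
qed

lemma var_lemma:
  fixes M :: "real^'n::finite^'n"
  assumes sym: "transpose M = M" and psd: "\<And>v. 0 \<le> v \<bullet> (M *v v)"
    and lb: "\<And>v. norm v = 1 \<Longrightarrow> e \<le> norm (M *v v)"
  shows "e * norm v ^ 2 \<le> v \<bullet> (M *v v)"
proof -
  let ?S = "sphere (0::real^'n) 1"
  have cont: "continuous_on ?S (\<lambda>v. v \<bullet> (M *v v))"
    by (intro continuous_intros bounded_linear.continuous_on[OF matrix_vector_mul_bounded_linear])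
  obtain w :: "real^'n" where "norm w = 1" using unit_exists by blast
  then have ne: "?S \<noteq> {}" by auto
  obtain v0 where v0S: "v0 \<in> ?S" and v0min: "\<And>y. y \<in> ?S \<Longrightarrow> v0 \<bullet> (M *v v0) \<le> y \<bullet> (M *v y)"
    using continuous_attains_inf[OF compact_sphere ne cont] by blast
  define c where "c = v0 \<bullet> (M *v v0)"
  have nv0: "norm v0 = 1" using v0S by simp
  have v0v0: "v0 \<bullet> v0 = 1" using nv0 by (simp add: norm_eq_sqrt_inner)
  have cmin: "c * norm y ^ 2 \<le> y \<bullet> (M *v y)" for y
  proof (cases "y = 0")
    case True then show ?thesis by simp
  next
    case False
    let ?u = "(1 / norm y) *\<^sub>R y"
    have "?u \<in> ?S" using False by simp
    then have "c \<le> ?u \<bullet> (M *v ?u)" using v0min c_def by blast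
    also have "\<dots> = (y \<bullet> (M *v y)) / norm y ^ 2"
      by (simp add: matrix_vector_mult_scaleR power2_eq_square)
    finally show ?thesis using False by (simp add: le_divide_eq)
  qed
  define z where "z = M *v v0 - c *\<^sub>R v0"
  have "z \<bullet> v0 = (M *v v0) \<bullet> v0 - c * (v0 \<bullet> v0)"
    unfolding z_def by (simp add: inner_diff_left)
  then have zv0: "z \<bullet> v0 = 0"
    by (simp add: v0v0 c_def inner_commute[of "M *v v0" v0])
  have "z \<bullet> z = z \<bullet> (M *v v0) - c * (z \<bullet> v0)"
    by (metis z_def inner_diff_right inner_scaleR_right)
  then have zMv0: "z \<bullet> (M *v v0) = z \<bullet> z" using zv0 by simp
  define K where "K = z \<bullet> (M *v z) - c * (z \<bullet> z)"
  have key: "0 \<le> - 2 * t * (z \<bullet> z) + t * t * K" for t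
  proof -
    let ?p = "v0 - t *\<^sub>R z"
    have "norm ?p ^ 2 = ?p \<bullet> ?p" by (simp add: power2_norm_eq_inner)
    also have "\<dots> = 1 + t * t * (z \<bullet> z)"
      by (simp add: inner_diff_left inner_diff_right v0v0 zv0 inner_commute[of v0 z])
    finally have np: "norm ?p ^ 2 = 1 + t * t * (z \<bullet> z)" .
    have "?p \<bullet> (M *v ?p) = c - 2 * t * (z \<bullet> (M *v v0)) + t * t * (z \<bullet> (M *v z))"
      by (simp add: matrix_vector_mult_diff_distrib matrix_vector_mult_scaleR inner_diff_left inner_diff_right
          c_def inner_sym_mat[OF sym, of v0 z] algebra_simps)
    with cmin[of ?p] np zMv0 show ?thesis by (simp add: K_def algebra_simps)
  qed
  have z0: "z = 0"
  proof (rule ccontr)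
    assume "z \<noteq> 0"
    then have Z: "0 < z \<bullet> z" by simp
    define t where "t = (z \<bullet> z) / (\<bar>K\<bar> + 1)"
    have t: "0 < t" using Z by (simp add: t_def)
    have "t * K \<le> t * \<bar>K\<bar>" using t by (simp add: mult_left_mono)
    also have "\<dots> < t * (\<bar>K\<bar> + 1)" using t by simp
    also have "\<dots> = z \<bullet> z" by (simp add: t_def)
    finally have "t * K < z \<bullet> z" .
    then have "t * (t * K) < t * (z \<bullet> z)" using t by simp
    moreover have "2 * (t * (z \<bullet> z)) \<le> t * (t * K)" using key[of t] by (simp add: algebra_simps)
    moreover have "0 < t * (z \<bullet> z)" using t Z by simp
    ultimately show False by linarith
  qed
  then have Mv0: "M *v v0 = c *\<^sub>R v0" by (simp add: z_def)
  have c0: "0 \<le> c" using psd c_def by simp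
  have "e \<le> norm (M *v v0)" using lb nv0 by simp
  also have "\<dots> = c" using Mv0 nv0 c0 by simp
  finally have "e \<le> c" .
  then have "e * norm v ^ 2 \<le> c * norm v ^ 2" by (simp add: mult_right_mono)
  also have "\<dots> \<le> v \<bullet> (M *v v)" by (rule cmin)
  finally show ?thesis .
qed




lemma ftc_quad:
  fixes F h :: "real \<Rightarrow> real"
  assumes ab: "a \<le> b" and hint: "h integrable_on {a..b}"
    and est: "\<And>s t. a \<le> s \<Longrightarrow> s \<le> t \<Longrightarrow> t \<le> b \<Longrightarrow> \<bar>F t - F s - integral {s..t} h\<bar> \<le> C * (t - s)^2"
  shows "F b - F a = integral {a..b} h"
proof -
  define D where "D t = F t - integral {a..t} h" for t
  have Ddiff: "D t - D s = F t - F s - integral {s..t} h" if "a \<le> s" "s \<le> t" "t \<le> b" for s t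
  proof -
    have "h integrable_on {a..t}" using hint that by (auto intro: integrable_on_subinterval)
    then have "integral {a..s} h + integral {s..t} h = integral {a..t} h"
      using that by (intro Henstock_Kurzweil_Integration.integral_combine) auto
    then show ?thesis unfolding D_def by simp
  qed
  have Db: "\<bar>D x - D y\<bar> \<le> \<bar>C\<bar> * (x - y)^2" if "x \<in> {a..b}" "y \<in> {a..b}" for x y
  proof (cases "y \<le> x")
    case True
    have "\<bar>D x - D y\<bar> \<le> C * (x - y)^2" using Ddiff[of y x] est[of y x] that True by auto
    also have "\<dots> \<le> \<bar>C\<bar> * (x - y)^2" by (simp add: mult_right_mono)
    finally show ?thesis .
  next
    case False
    have "\<bar>D x - D y\<bar> = \<bar>D y - D x\<bar>" by simp
    also have "\<dots> \<le> C * (y - x)^2" using Ddiff[of x y] est[of x y] that False by auto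
    also have "\<dots> \<le> \<bar>C\<bar> * (x - y)^2" by (simp add: mult_right_mono power2_commute)
    finally show ?thesis .
  qed
  have Dl: "\<bar>D x - D y\<bar> \<le> (\<bar>C\<bar> * (b - a)) * \<bar>x - y\<bar>" if "x \<in> {a..b}" "y \<in> {a..b}" for x y
  proof -
    have "(x - y)^2 = \<bar>x - y\<bar> * \<bar>x - y\<bar>" by (simp add: power2_eq_square abs_mult_self_eq)
    also have "\<dots> \<le> (b - a) * \<bar>x - y\<bar>" using that by (intro mult_right_mono) auto
    finally have "\<bar>C\<bar> * (x - y)^2 \<le> \<bar>C\<bar> * ((b - a) * \<bar>x - y\<bar>)" by (simp add: mult_left_mono)
    then show ?thesis using Db[OF that] by (simp add: mult.assoc)
  qed
  have "D b = D a"
  proof (cases "a = b")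
    case True then show ?thesis by simp
  next
    case False
    then have altb: "a < b" using ab by simp
    have "(\<bar>C\<bar> * (b - a))-lipschitz_on {a..b} D"
      by (rule lipschitz_onI) (use Dl ab in \<open>auto simp: dist_real_def\<close>)
    then have cont: "continuous_on {a..b} D" by (rule lipschitz_on_continuous_on)
    show ?thesis
    proof (rule DERIV_isconst_end[OF altb cont])
      fix x assume x: "a < x" "x < b"
      show "DERIV D x :> 0"
        unfolding has_field_derivative_iff
      proof (rule Lim_null_comparison)
        show "\<forall>\<^sub>F y in at x. norm ((D y - D x) / (y - x)) \<le> \<bar>C\<bar> * \<bar>y - x\<bar>"
          unfolding eventually_at
        proof (intro exI[of _ "min (x - a) (b - x)"] conjI ballI impI)
          show "0 < min (x - a) (b - x)" using x by simp
          fix y assume y: "y \<in> UNIV" "y \<noteq> x \<and> dist y x < min (x - a) (b - x)"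
          then have yab: "y \<in> {a..b}" by (auto simp: dist_real_def)
          have "\<bar>D y - D x\<bar> \<le> \<bar>C\<bar> * (y - x)^2" using Db[OF yab] x by simp
          also have "\<dots> = (\<bar>C\<bar> * \<bar>y - x\<bar>) * \<bar>y - x\<bar>" by (simp add: power2_eq_square abs_mult_self_eq)
          finally show "norm ((D y - D x) / (y - x)) \<le> \<bar>C\<bar> * \<bar>y - x\<bar>"
            using y by (simp add: divide_le_eq abs_divide)
        qed
        have "((\<lambda>y. \<bar>C\<bar> * \<bar>y - x\<bar>) \<longlongrightarrow> \<bar>C\<bar> * \<bar>x - x\<bar>) (at x)"
          by (intro tendsto_intros)
        then show "((\<lambda>y. \<bar>C\<bar> * \<bar>y - x\<bar>) \<longlongrightarrow> 0) (at x)" by simp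
      qed
    qed
  qed
  then show ?thesis unfolding D_def by simp
qed

lemma riemann_integrable:
  assumes "riemann_integrable_on f a b"
  shows "f integrable_on {a..b}"
proof -
  obtain I where I: "\<forall>e>0. \<exists>d>0. \<forall>D. D tagged_division_of {a..b} \<and> (\<lambda>x. ball x d) fine D \<longrightarrow>
       norm ((\<Sum>(x,K)\<in>D. Henstock_Kurzweil_Integration.content K *\<^sub>R f x) - I) < e"
    using assms unfolding riemann_integrable_on_def by blast
  have "(f has_integral I) {a..b}"
    unfolding has_integral_real
  proof (intro allI impI)
    fix e :: real assume "0 < e"
    then obtain d where "d > 0" and d: "\<forall>D. D tagged_division_of {a..b} \<and> (\<lambda>x. ball x d) fine D \<longrightarrow>
       norm ((\<Sum>(x,K)\<in>D. Henstock_Kurzweil_Integration.content K *\<^sub>R f x) - I) < e" using I by blast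
    then show "\<exists>\<gamma>. gauge \<gamma> \<and> (\<forall>\<D>. \<D> tagged_division_of {a..b} \<and> \<gamma> fine \<D> \<longrightarrow>
        norm (sum (\<lambda>(x,k). Henstock_Kurzweil_Integration.content k *\<^sub>R f x) \<D> - I) < e)"
      by (intro exI[of _ "\<lambda>x. ball x d"]) auto
  qed
  then show ?thesis by blast
qed

lemma integrable_cont_mult:
  fixes f g :: "real \<Rightarrow> real"
  assumes cf: "continuous_on {a..b} f" and g: "g integrable_on {a..b}" and gb: "\<And>t. t \<in> {a..b} \<Longrightarrow> \<bar>g t\<bar> \<le> B"
  shows "(\<lambda>t. f t * g t) integrable_on {a..b}"
proof -
  have "g absolutely_integrable_on {a..b}"
    by (rule absolutely_integrable_integrable_bound[where g = "\<lambda>_. B"]) (use gb g in auto)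
  moreover have "f \<in> borel_measurable (lebesgue_on {a..b})"
    by (rule continuous_imp_measurable_on_sets_lebesgue[OF cf]) auto
  moreover have "bounded (f ` {a..b})"
    by (rule compact_imp_bounded[OF compact_continuous_image[OF cf compact_Icc]])
  ultimately have "(\<lambda>t. f t * g t) absolutely_integrable_on {a..b}"
    by (intro absolutely_integrable_bounded_measurable_product_real) auto
  then show ?thesis using absolutely_integrable_on_def by blast
qed




definition pr :: "real^'p::finite \<Rightarrow> real^('p\<times>'n::finite) \<Rightarrow> real^'n" where
  "pr r y = (\<Sum>i\<in>UNIV. r$i *\<^sub>R blk y i)"

lemma blk_add: "blk (a + b) i = blk a i + blk b i" by (simp add: blk_def vec_eq_iff)
lemma blk_scale: "blk (c *\<^sub>R a) i = c *\<^sub>R blk a i" by (simp add: blk_def vec_eq_iff)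
lemma blk_diff: "blk (a - b) i = blk a i - blk b i" by (simp add: blk_def vec_eq_iff)

lemma pr_linear: "linear (pr r)"
  by (rule linearI) (simp_all add: pr_def blk_add blk_scale scaleR_add_right sum.distrib scaleR_sum_right mult.commute)

lemma pr_bounded_linear: "bounded_linear (pr r)"
  using pr_linear linear_conv_bounded_linear by blast

lemma pr_diff: "pr r (a - b) = pr r a - pr r b"
  using linear_diff[OF pr_linear] by blast

lemma pr_kron:
  assumes "r v* G = 0"
  shows "pr r (kron G M *v y) = 0"
proof -
  have col0: "(\<Sum>i\<in>UNIV. r$i * G$i$j) = 0" for j
  proof -
    have "(r v* G)$j = 0" using assms by simp
    then show ?thesis by (simp add: vector_matrix_mult_def mult.commute)
  qed
  have "pr r (kron G M *v y) = (\<Sum>i\<in>UNIV. \<Sum>j\<in>UNIV. (r$i * G$i$j) *\<^sub>R (M *v blk y j))"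
    by (simp add: pr_def blk_kron scaleR_sum_right)
  also have "\<dots> = (\<Sum>j\<in>UNIV. \<Sum>i\<in>UNIV. (r$i * G$i$j) *\<^sub>R (M *v blk y j))"
    by (rule sum.swap)
  also have "\<dots> = (\<Sum>j\<in>UNIV. (\<Sum>i\<in>UNIV. r$i * G$i$j) *\<^sub>R (M *v blk y j))"
    by (simp add: scaleR_sum_left)
  also have "\<dots> = 0" by (simp add: col0)
  finally show ?thesis .
qed

lemma pr_ones:
  assumes "r \<bullet> 1 = 1"
  shows "pr r (kron (ones_r r) (mat 1) *v y) = pr r y"
proof -
  have sr: "(\<Sum>i\<in>UNIV. r$i) = 1" using assms by (simp add: inner_vec_def)
  have "blk (kron (ones_r r) (mat 1) *v y) i = pr r y" for i
    by (simp add: blk_kron ones_r_def pr_def)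
  then have "pr r (kron (ones_r r) (mat 1) *v y) = (\<Sum>i\<in>UNIV. r$i *\<^sub>R pr r y)"
    by (simp add: pr_def)
  also have "\<dots> = pr r y" by (simp add: scaleR_sum_left[symmetric] sr)
  finally show ?thesis .
qed

lemma lyap:
  fixes G W :: "real^'p::finite^'p" and M :: "real^'n::finite^'n" and y :: "real^('p\<times>'n)"
  assumes Wsym: "transpose W = W"
    and L: "transpose (G - ones_r r) ** W + W ** (G - ones_r r) = - mat 1"
    and Msym: "transpose M = M" and py: "pr r y = 0"
  shows "2 * (y \<bullet> (kron W (mat 1) *v (kron G M *v y))) = - phi M y y"
proof -
  define c where "c i l = blk y i \<bullet> (M *v blk y l)" for i l
  define A where "A = W ** G"
  have csym: "c i l = c l i" for i l unfolding c_def by (rule inner_sym_mat[OF Msym])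
  have Wij: "W$i$j = W$j$i" for i j using Wsym by (metis transpose_def vec_lambda_beta)
  have rc1: "(\<Sum>i\<in>UNIV. r$i * c i l) = 0" for l
  proof -
    have "(\<Sum>i\<in>UNIV. r$i * c i l) = pr r y \<bullet> (M *v blk y l)"
      by (simp add: c_def pr_def inner_sum_left)
    then show ?thesis using py by simp
  qed
  have rc2: "(\<Sum>l\<in>UNIV. r$l * c i l) = 0" for i
    using rc1[of i] by (simp add: csym)
  have q: "y \<bullet> (kron W (mat 1) *v (kron G M *v y)) = (\<Sum>i\<in>UNIV. \<Sum>l\<in>UNIV. A$i$l * c i l)"
    by (simp add: matrix_vector_mul_assoc kron_mult A_def inner_blk[of y] blk_kron inner_sum_right c_def)
  have Lent: "A$i$l + A$l$i = - (mat 1 :: real^'p^'p)$i$l + r$i * (\<Sum>k\<in>UNIV. W$k$l) + (\<Sum>k\<in>UNIV. W$i$k) * r$l" for i l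
  proof -
    have "(transpose (G - ones_r r) ** W + W ** (G - ones_r r))$i$l = (- mat 1 :: real^'p^'p)$i$l"
      using L by simp
    then have "(\<Sum>k\<in>UNIV. (G$k$i - r$i) * W$k$l) + (\<Sum>k\<in>UNIV. W$i$k * (G$k$l - r$l)) = - (mat 1 :: real^'p^'p)$i$l"
      by (simp add: matrix_matrix_mult_def transpose_def ones_r_def)
    moreover have "(\<Sum>k\<in>UNIV. (G$k$i - r$i) * W$k$l) = A$l$i - r$i * (\<Sum>k\<in>UNIV. W$k$l)"
      by (simp add: A_def matrix_matrix_mult_def algebra_simps sum_subtractf sum_distrib_left Wij[of _ l])
    moreover have "(\<Sum>k\<in>UNIV. W$i$k * (G$k$l - r$l)) = A$i$l - (\<Sum>k\<in>UNIV. W$i$k) * r$l"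
      by (simp add: A_def matrix_matrix_mult_def algebra_simps sum_subtractf sum_distrib_right sum_distrib_left)
    ultimately show ?thesis by linarith
  qed
  have "2 * (\<Sum>i\<in>UNIV. \<Sum>l\<in>UNIV. A$i$l * c i l)
      = (\<Sum>i\<in>UNIV. \<Sum>l\<in>UNIV. A$i$l * c i l) + (\<Sum>l\<in>UNIV. \<Sum>i\<in>UNIV. A$l$i * c l i)" by simp
  also have "\<dots> = (\<Sum>i\<in>UNIV. \<Sum>l\<in>UNIV. A$i$l * c i l) + (\<Sum>i\<in>UNIV. \<Sum>l\<in>UNIV. A$l$i * c i l)"
    by (subst sum.swap) (simp add: csym)
  also have "\<dots> = (\<Sum>i\<in>UNIV. \<Sum>l\<in>UNIV. (A$i$l + A$l$i) * c i l)"
    by (simp add: sum.distrib[symmetric] distrib_right)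
  also have "\<dots> = (\<Sum>i\<in>UNIV. \<Sum>l\<in>UNIV. - (mat 1 :: real^'p^'p)$i$l * c i l)
      + (\<Sum>l\<in>UNIV. (\<Sum>k\<in>UNIV. W$k$l) * (\<Sum>i\<in>UNIV. r$i * c i l))
      + (\<Sum>i\<in>UNIV. (\<Sum>k\<in>UNIV. W$i$k) * (\<Sum>l\<in>UNIV. r$l * c i l))"
    apply (simp only: Lent distrib_right sum.distrib)
    apply (subst sum.swap[of _ UNIV UNIV]) back
    apply (simp add: sum_distrib_left mult_ac)
    done
  also have "\<dots> = - (\<Sum>i\<in>UNIV. c i i)"
  proof -
    have "(\<Sum>l\<in>UNIV. - (mat 1 :: real^'p^'p)$i$l * c i l) = - c i i" for i
    proof -
      have "(\<Sum>l\<in>UNIV. - (mat 1 :: real^'p^'p)$i$l * c i l) = (\<Sum>l\<in>UNIV. if i = l then - c i l else 0)"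
        by (rule sum.cong) (auto simp: mat_def)
      then show ?thesis by simp
    qed
    then show ?thesis by (simp add: rc1 rc2 sum_negf)
  qed
  also have "\<dots> = - phi M y y" by (simp add: phi_blk c_def)
  finally show ?thesis using q by simp
qed




lemma phi_coord: "phi M u v = (\<Sum>i\<in>UNIV. \<Sum>k\<in>UNIV. \<Sum>m\<in>UNIV. (u$(i,k) * v$(i,m)) * M$k$m)"
  by (simp add: phi_blk inner_vec_def matrix_vector_mult_def blk_def sum_distrib_left mult_ac)

lemma integrable_nth: "f integrable_on S \<Longrightarrow> (\<lambda>x. f x $ k) integrable_on S"
  using integrable_linear[OF _ bounded_linear_vec_nth, of f S k] by (simp add: o_def)

lemma entry_bound:
  assumes "\<And>v. norm (M *v v) \<le> norm v"
  shows "\<bar>(M::real^'n::finite^'m::finite)$k$m\<bar> \<le> 1"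
proof -
  have "(M *v axis m 1)$k = M$k$m"
    by (simp add: matrix_vector_mult_basis column_def)
  moreover have "\<bar>(M *v axis m 1)$k\<bar> \<le> norm (M *v axis m 1)" by (rule component_le_norm_cart)
  moreover have "norm (M *v axis m 1) \<le> 1" using assms[of "axis m 1"] by simp
  ultimately show ?thesis by simp
qed

lemma phi_integrable:
  fixes Q :: "real \<Rightarrow> real^'n::finite^'n" and y1 y2 :: "real \<Rightarrow> real^('p::finite\<times>'n)"
  assumes "continuous_on {a..b} y1" "continuous_on {a..b} y2" "Q integrable_on {a..b}"
    and "\<And>t k m. t \<in> {a..b} \<Longrightarrow> \<bar>Q t$k$m\<bar> \<le> 1"
  shows "(\<lambda>t. phi (Q t) (y1 t) (y2 t)) integrable_on {a..b}"
  unfolding phi_coord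
  by (intro integrable_sum integrable_cont_mult[where B=1] continuous_intros integrable_nth assms) auto

lemma qf_linear: "linear (\<lambda>N::real^'n::finite^'n. v \<bullet> (N *v v))"
  by (rule linearI) (simp_all add: matrix_vector_mult_add_rdistrib inner_add_right scaleR_matrix_vector_assoc[symmetric])

lemma integral_qf:
  fixes Q :: "real \<Rightarrow> real^'n::finite^'n" and v :: "real^'n"
  assumes "Q integrable_on S"
  shows "integral S (\<lambda>t. v \<bullet> (Q t *v v)) = v \<bullet> (integral S Q *v v)"
  using integral_linear[OF assms, of "\<lambda>N::real^'n::finite^'n. v \<bullet> (N *v v)"] qf_linear linear_conv_bounded_linear
  by (auto simp: o_def)

lemma integrable_qf:
  fixes Q :: "real \<Rightarrow> real^'n::finite^'n"
  assumes "Q integrable_on S"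
  shows "(\<lambda>t. v \<bullet> (Q t *v (v::real^'n::finite))) integrable_on S"
  using integrable_linear[OF assms, of "\<lambda>N::real^'n::finite^'n. v \<bullet> (N *v v)"] qf_linear linear_conv_bounded_linear
  by (auto simp: o_def)

lemma norm_integral_le:
  fixes f :: "real \<Rightarrow> 'a::euclidean_space"
  assumes "f integrable_on {a..b}" "a \<le> b" "\<And>t. t \<in> {a..b} \<Longrightarrow> norm (f t) \<le> B" "0 \<le> B"
  shows "norm (integral {a..b} f) \<le> B * (b - a)"
proof -
  have "norm (integral (cbox a b) f) \<le> B * Henstock_Kurzweil_Integration.content (cbox a b)"
    by (rule has_integral_bound[OF assms(4)]) (use assms(1,3) in \<open>auto simp: cbox_interval\<close>)
  then show ?thesis using assms(2) by (simp add: cbox_interval content_real)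
qed

lemma num_lemma:
  fixes e T G :: real
  assumes e: "0 < e" "e \<le> T" and G: "1 \<le> G"
  shows "delta_eps e T * (1 + T * G)^2 \<le> e * G^3"
proof -
  have T: "0 < T" using e by simp
  have d0: "0 \<le> delta_eps e T" using e T by (simp add: delta_eps_def)
  have main: "delta_eps e T * (1 + T)^2 \<le> e"
  proof (cases "T \<le> 2/5")
    case True
    have "(1 + T)^2 \<le> (7/5)^2" using T True by (intro power_mono) auto
    moreover have "(7/5::real)^2 \<le> 2" by (simp add: power2_eq_square)
    ultimately have "(1 + T)^2 \<le> 2" by linarith
    moreover have "delta_eps e T \<le> e / 2" by (simp add: delta_eps_def)
    ultimately have "delta_eps e T * (1 + T)^2 \<le> (e / 2) * 2"
      using d0 by (intro mult_mono) auto
    then show ?thesis by simp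
  next
    case False
    have "e^2 \<le> T^2" using e by (intro power_mono) auto
    then have "e^3 \<le> e * T^2" using e by (simp add: power3_eq_cube power2_eq_square mult_left_mono)
    then have "e^3 / (240 * T^5) \<le> e * T^2 / (240 * T^5)" using T by (simp add: divide_right_mono)
    also have "\<dots> = e / (240 * T^3)" using T by (simp add: power_numeral_reduce field_simps)
    finally have d1: "delta_eps e T \<le> e / (240 * T^3)" by (simp add: delta_eps_def)
    have "1 + T \<le> 7/2 * T" using False by simp
    then have "(1 + T)^2 \<le> (7/2 * T)^2" using T by (intro power_mono) auto
    also have "\<dots> = 49/4 * T^2" by (simp add: power2_eq_square)
    also have "\<dots> \<le> 240 * T^3"
    proof -
      have "49/4 \<le> 240 * T" using False by simp
      then have "49/4 * T^2 \<le> (240 * T) * T^2" using T by (intro mult_right_mono) auto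
      then show ?thesis by (simp add: power2_eq_square power3_eq_cube mult_ac)
    qed
    finally have h: "(1 + T)^2 \<le> 240 * T^3" .
    have "delta_eps e T * (1 + T)^2 \<le> e / (240 * T^3) * (240 * T^3)"
      using d1 h d0 by (intro mult_mono) auto
    also have "\<dots> = e" using T by simp
    finally show ?thesis .
  qed
  have "(1 + T * G)^2 \<le> ((1 + T) * G)^2"
    using T G by (intro power_mono) (auto simp: algebra_simps)
  also have "\<dots> = (1 + T)^2 * G^2" by (simp add: power_mult_distrib)
  also have "\<dots> \<le> (1 + T)^2 * G^3"
  proof -
    have "G^2 \<le> G^3" using G by (simp add: power_increasing)
    then show ?thesis by (simp add: mult_left_mono)
  qed
  finally have "delta_eps e T * (1 + T * G)^2 \<le> delta_eps e T * ((1 + T)^2 * G^3)"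
    using d0 by (simp add: mult_left_mono)
  also have "\<dots> = (delta_eps e T * (1 + T)^2) * G^3" by simp
  also have "\<dots> \<le> e * G^3" using main G by (intro mult_right_mono) auto
  finally show ?thesis .
qed




lemma integrable_mult_const: "(f::real \<Rightarrow> real) integrable_on S \<Longrightarrow> (\<lambda>x. c * f x) integrable_on S"
  using integrable_cmul[of f S c] by simp

lemma inner_mat_transpose: "(w::real^'n::finite) \<bullet> (A *v z) = (transpose A *v w) \<bullet> z"
  by (metis dot_lmul_matrix transpose_matrix_vector)

lemma integral_nth: "f integrable_on S \<Longrightarrow> integral S (\<lambda>x. f x $ k) = integral S f $ k"
  using integral_linear[OF _ bounded_linear_vec_nth, of f S k] by (simp add: o_def)

theorem theorem3:
  fixes \<Gamma> \<Omega> :: "real^'p::finite^'p" and r :: "real^'p"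
    and Q :: "real \<Rightarrow> real^'n::finite^'n" and x :: "real \<Rightarrow> real^('p \<times> 'n)"
    and \<epsilon> T :: real
  assumes "connected_interconnection \<Gamma>"
    and "r v* \<Gamma> = 0" and "r \<bullet> 1 = 1"
    and "transpose \<Omega> = \<Omega>" and "\<forall>v. v \<noteq> 0 \<longrightarrow> 0 < v \<bullet> (\<Omega> *v v)"
    and "transpose (\<Gamma> - ones_r r) ** \<Omega> + \<Omega> ** (\<Gamma> - ones_r r) = - mat 1"
    and "0 < \<epsilon>" and "0 < T"
    and "\<forall>t\<ge>0. Q t \<in> Qbar"
    and "\<forall>t\<ge>0. riemann_integrable_on Q 0 t"
    and "sigma_min (integral {0..T} Q) \<ge> \<epsilon>"
    and "\<forall>t\<in>{0..T}. ((\<lambda>s. kron \<Gamma> (Q s) *v x s) has_integral (x t - x 0)) {0..t}"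
  shows "let V = (\<lambda>y. y \<bullet> (kron \<Omega> (mat 1) *v y));
             \<rho> = sigma_max \<Omega> * max 1 (sigma_max \<Gamma> ^ 3);
             xbar = kron (ones_r r) (mat 1) *v x 0
         in V (x T - xbar) \<le> (1 - delta_eps \<epsilon> T / \<rho>) * V (x 0 - xbar)"
proof -
  define xb where "xb = kron (ones_r r) (mat 1) *v x 0"
  define e where "e = (\<lambda>t. x t - xb)"
  define g where "g = (\<lambda>s. kron \<Gamma> (Q s) *v x s)"
  define Ko where "Ko = kron \<Omega> (mat 1 :: real^'n^'n)"
  define V where "V = (\<lambda>y::real^('p\<times>'n). y \<bullet> (Ko *v y))"
  define sO where "sO = sigma_max \<Omega>"
  define gG where "gG = sigma_max \<Gamma>"
  define GG where "GG = max 1 gG"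
  have T0: "0 < T" using assms(8) .
  have gG0: "0 \<le> gG" unfolding gG_def by (rule sigma_max_nonneg)
  have sO0: "0 \<le> sO" unfolding sO_def by (rule sigma_max_nonneg)
  have GG1: "1 \<le> GG" by (simp add: GG_def)
  have QB: "Q t \<in> Qbar" if "0 \<le> t" for t using assms(9) that by blast
  have Qsym: "transpose (Q t) = Q t" if "0 \<le> t" for t using Qbar_D(1)[OF QB[OF that]] .
  have Qpsd: "0 \<le> v \<bullet> (Q t *v v)" if "0 \<le> t" for t v using Qbar_D(2)[OF QB[OF that]] .
  have Qn: "norm (Q t *v v) \<le> norm v" if "0 \<le> t" for t v using Qbar_D(3)[OF QB[OF that]] .
  have Qent: "\<bar>Q t$k$m\<bar> \<le> 1" if "t \<in> {0..T}" for t k m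
    by (rule entry_bound) (use Qn that in auto)
  have Qint: "Q integrable_on {0..T}"
    by (rule riemann_integrable) (use assms(10) T0 in auto)
  have gint_t: "(g has_integral (x t - x 0)) {0..t}" if "t \<in> {0..T}" for t
    using assms(12) that unfolding g_def by blast
  have gint: "g integrable_on {0..T}" using gint_t[of T] T0 by auto
  have gsub: "g integrable_on {s..u}" if "0 \<le> s" "u \<le> T" for s u
    by (rule integrable_on_subinterval[OF gint]) (use that in auto)
  have xeq: "x t = x 0 + integral {0..t} g" if "t \<in> {0..T}" for t
    using integral_unique[OF gint_t[OF that]] by simp
  have xdiff: "x u - x s = integral {s..u} g" if "0 \<le> s" "s \<le> u" "u \<le> T" for s u
  proof -
    have "integral {0..s} g + integral {s..u} g = integral {0..u} g"
      by (rule Henstock_Kurzweil_Integration.integral_combine) (use that gsub in auto)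
    moreover have "x u - x s = integral {0..u} g - integral {0..s} g" using xeq[of u] xeq[of s] that by auto
    ultimately show ?thesis by (metis add_diff_cancel_left')
  qed
  have xcont: "continuous_on {0..T} x"
  proof -
    have "continuous_on {0..T} (\<lambda>t. x 0 + integral {0..t} g)"
      by (intro continuous_intros indefinite_integral_continuous_1 gint)
    then show ?thesis by (rule continuous_on_eq) (simp only: xeq[symmetric])
  qed
  have econt: "continuous_on {0..T} e" unfolding e_def by (intro continuous_intros xcont)
  have ct: "ct_interconnection \<Gamma>" using assms(1) by (simp add: connected_interconnection_def)
  have rows: "(\<Sum>j\<in>UNIV. \<Gamma>$i$j) = 0" for i
  proof -
    have "\<Gamma>$i$i = - (\<Sum>j\<in>UNIV-{i}. \<Gamma>$i$j)" using ct by (simp add: ct_interconnection_def)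
    moreover have "(\<Sum>j\<in>UNIV. \<Gamma>$i$j) = \<Gamma>$i$i + (\<Sum>j\<in>UNIV-{i}. \<Gamma>$i$j)"
      by (simp add: sum.remove[of UNIV i])
    ultimately show ?thesis by simp
  qed
  have GP: "\<Gamma> ** ones_r r = 0"
  proof -
    have "(\<Sum>k\<in>UNIV. \<Gamma>$i$k * r$j) = 0" for i j
      by (simp add: sum_distrib_right[symmetric] rows)
    then show ?thesis by (simp add: vec_eq_iff matrix_matrix_mult_def ones_r_def)
  qed
  have kron0: "kron \<Gamma> N *v xb = 0" for N :: "real^'n^'n"
  proof -
    have "kron \<Gamma> N *v xb = kron (\<Gamma> ** ones_r r) (N ** mat 1) *v x 0"
      by (simp add: xb_def matrix_vector_mul_assoc kron_mult)
    also have "\<dots> = 0" by (simp add: GP kron_def vec_eq_iff matrix_vector_mult_def)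
    finally show ?thesis .
  qed
  have ge: "g s = kron \<Gamma> (Q s) *v e s" for s
    by (simp add: g_def e_def matrix_vector_mult_diff_distrib kron0)
  have pre: "pr r (e t) = 0" if "t \<in> {0..T}" for t
  proof -
    have "((pr r \<circ> g) has_integral pr r (x t - x 0)) {0..t}"
      by (rule has_integral_linear[OF gint_t[OF that] pr_bounded_linear])
    moreover have "pr r \<circ> g = (\<lambda>_. 0)"
      by (simp add: fun_eq_iff g_def pr_kron[OF assms(2)])
    ultimately have "((\<lambda>_. 0) has_integral pr r (x t - x 0)) {0..t}" by simp
    then have "pr r (x t - x 0) = 0" using has_integral_unique[OF has_integral_0] by metis
    moreover have "pr r xb = pr r (x 0)" unfolding xb_def by (rule pr_ones[OF assms(3)])
    ultimately show ?thesis by (simp add: e_def pr_diff)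
  qed
  have lyp: "2 * (e t \<bullet> (Ko *v g t)) = - phi (Q t) (e t) (e t)" if "t \<in> {0..T}" for t
    unfolding ge Ko_def
    by (rule lyap[OF assms(4) assms(6) Qsym pre[OF that]]) (use that in auto)

  have phint: "(\<lambda>t. phi (Q t) (y1 t) (y2 t)) integrable_on {0..T}"
    if "continuous_on {0..T} y1" "continuous_on {0..T} y2" for y1 y2
    by (rule phi_integrable[OF that Qint Qent]) auto
  have Kosym: "transpose Ko = Ko" by (simp add: Ko_def kron_transpose assms(4))
  have Kob: "norm (Ko *v y) \<le> sO * norm y" for y
    unfolding Ko_def sO_def by (rule kron_I_left_bound[OF sigma_max_bound sigma_max_nonneg])
  have absK: "\<bar>y \<bullet> (Ko *v z)\<bar> \<le> sO * (norm y * norm z)" for y z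
  proof -
    have "\<bar>y \<bullet> (Ko *v z)\<bar> \<le> norm y * norm (Ko *v z)" by (rule Cauchy_Schwarz_ineq2)
    also have "\<dots> \<le> norm y * (sO * norm z)" by (intro mult_left_mono Kob) simp
    finally show ?thesis by (simp add: mult_ac)
  qed
  have gsplit: "kron \<Gamma> (Q t) = kron \<Gamma> (mat 1) ** kron (mat 1) (Q t)" for t
    by (simp add: kron_mult)
  have gn: "norm (g t) \<le> gG * norm (e t)" if "t \<in> {0..T}" for t
  proof -
    have "norm (g t) = norm (kron \<Gamma> (mat 1) *v (kron (mat 1) (Q t) *v e t))"
      by (simp add: ge gsplit matrix_vector_mul_assoc)
    also have "\<dots> \<le> gG * norm (kron (mat 1) (Q t) *v e t)"
      unfolding gG_def by (rule kron_I_left_bound[OF sigma_max_bound sigma_max_nonneg])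
    also have "\<dots> \<le> gG * (1 * norm (e t))"
      by (intro mult_left_mono kron_I_right_bound gG0) (use Qn that in auto)
    finally show ?thesis by simp
  qed
  obtain Be where Be: "0 < Be" "\<And>t. t \<in> {0..T} \<Longrightarrow> norm (e t) \<le> Be"
    using bounded_pos[of "e ` {0..T}"] compact_imp_bounded[OF compact_continuous_image[OF econt compact_Icc]]
    by auto
  define Cg where "Cg = gG * Be"
  have Cg0: "0 \<le> Cg" using gG0 Be by (simp add: Cg_def)
  have gb: "norm (g t) \<le> Cg" if "t \<in> {0..T}" for t
    using gn[OF that] Be(2)[OF that] gG0 unfolding Cg_def by (meson mult_left_mono order_trans)
  have edif: "e u - e s = integral {s..u} g" if "0 \<le> s" "s \<le> u" "u \<le> T" for s u
    using xdiff[OF that] by (simp add: e_def)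
  have edb: "norm (e u - e s) \<le> Cg * (u - s)" if "0 \<le> s" "s \<le> u" "u \<le> T" for s u
    unfolding edif[OF that] by (rule norm_integral_le[OF gsub]) (use that gb Cg0 in auto)
  define S where "S = integral {0..T} (\<lambda>t. phi (Q t) (e t) (e t))"
  have hint: "(\<lambda>t. - phi (Q t) (e t) (e t)) integrable_on {0..T}"
    by (intro integrable_neg phint econt)
  have VT: "V (e T) - V (e 0) = integral {0..T} (\<lambda>t. - phi (Q t) (e t) (e t))"
  proof (rule ftc_quad[where C = "3 * sO * Cg^2"])
    show "0 \<le> T" using T0 by simp
    show "(\<lambda>t. - phi (Q t) (e t) (e t)) integrable_on {0..T}" by (rule hint)
    fix s t assume st: "0 \<le> s" "s \<le> t" "t \<le> T"
    define D where "D = e t - e s"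
    have Dint: "D = integral {s..t} g" unfolding D_def by (rule edif[OF st])
    have Dn: "norm D \<le> Cg * (t - s)" unfolding D_def by (rule edb[OF st])
    have VV: "V (e t) - V (e s) = 2 * (e s \<bullet> (Ko *v D)) + D \<bullet> (Ko *v D)"
    proof -
      have et: "e t = e s + D" by (simp add: D_def)
      have "D \<bullet> (Ko *v e s) = e s \<bullet> (Ko *v D)" by (rule inner_sym_mat[OF Kosym])
      then show ?thesis unfolding V_def et
        by (simp add: matrix_vector_right_distrib inner_add_left inner_add_right)
    qed
    define k1 where "k1 = (\<lambda>u. 2 * (e s \<bullet> (Ko *v g u)))"
    define k2 where "k2 = (\<lambda>u. 2 * ((e u - e s) \<bullet> (Ko *v g u)))"
    have bl: "bounded_linear (\<lambda>z. 2 * (e s \<bullet> (Ko *v z)))"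
    proof -
      have "linear (\<lambda>z. 2 * (e s \<bullet> (Ko *v z)))"
        by (rule linearI) (simp_all add: matrix_vector_right_distrib inner_add_right matrix_vector_mult_scaleR algebra_simps)
      then show ?thesis using linear_conv_bounded_linear by blast
    qed
    have k1int: "k1 integrable_on {s..t}"
      using integrable_linear[OF gsub[of s t] bl] st by (simp add: k1_def o_def)
    have k1I: "integral {s..t} k1 = 2 * (e s \<bullet> (Ko *v D))"
      using integral_linear[OF gsub[of s t] bl] st by (simp add: k1_def o_def Dint)
    have hst: "(\<lambda>u. - phi (Q u) (e u) (e u)) integrable_on {s..t}"
      by (rule integrable_on_subinterval[OF hint]) (use st in auto)
    have hk: "- phi (Q u) (e u) (e u) = k1 u + k2 u" if "u \<in> {s..t}" for u
    proof -
      have "- phi (Q u) (e u) (e u) = 2 * (e u \<bullet> (Ko *v g u))" using lyp[of u] that st by simp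
      also have "\<dots> = k1 u + k2 u" by (simp add: k1_def k2_def inner_diff_left algebra_simps)
      finally show ?thesis .
    qed
    have k2int: "k2 integrable_on {s..t}"
    proof -
      have "(\<lambda>u. - phi (Q u) (e u) (e u) - k1 u) integrable_on {s..t}"
        by (rule integrable_diff[OF hst k1int])
      then show ?thesis by (rule integrable_eq) (use hk in auto)
    qed
    have hI: "integral {s..t} (\<lambda>u. - phi (Q u) (e u) (e u)) = integral {s..t} k1 + integral {s..t} k2"
    proof -
      have "integral {s..t} (\<lambda>u. - phi (Q u) (e u) (e u)) = integral {s..t} (\<lambda>u. k1 u + k2 u)"
        by (rule integral_cong) (use hk in auto)
      also have "\<dots> = integral {s..t} k1 + integral {s..t} k2" by (rule integral_add[OF k1int k2int])
      finally show ?thesis .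
    qed
    have k2b: "norm (integral {s..t} k2) \<le> (2 * sO * Cg^2 * (t - s)) * (t - s)"
    proof (rule norm_integral_le[OF k2int])
      show "s \<le> t" using st by simp
      show "0 \<le> 2 * sO * Cg^2 * (t - s)" using sO0 st by simp
      fix u assume u: "u \<in> {s..t}"
      have "norm (k2 u) \<le> 2 * (sO * (norm (e u - e s) * norm (g u)))"
        unfolding k2_def using absK[of "e u - e s" "g u"] by simp
      also have "\<dots> \<le> 2 * (sO * ((Cg * (t - s)) * Cg))"
      proof -
        have "norm (e u - e s) \<le> Cg * (t - s)"
          using edb[of s u] u st Cg0 by (meson atLeastAtMost_iff diff_right_mono mult_left_mono order_trans)
        moreover have "norm (g u) \<le> Cg" using gb[of u] u st by simp
        ultimately show ?thesis using sO0 Cg0 st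
          by (intro mult_left_mono mult_mono) auto
      qed
      also have "\<dots> = 2 * sO * Cg^2 * (t - s)" by (simp add: power2_eq_square mult_ac)
      finally show "norm (k2 u) \<le> 2 * sO * Cg^2 * (t - s)" .
    qed
    have DD: "\<bar>D \<bullet> (Ko *v D)\<bar> \<le> sO * Cg^2 * (t - s)^2"
    proof -
      have "\<bar>D \<bullet> (Ko *v D)\<bar> \<le> sO * (norm D * norm D)" by (rule absK)
      also have "\<dots> \<le> sO * ((Cg * (t - s)) * (Cg * (t - s)))"
        using Dn sO0 Cg0 st by (intro mult_left_mono mult_mono) auto
      finally show ?thesis by (simp add: power2_eq_square mult_ac)
    qed
    have "V (e t) - V (e s) - integral {s..t} (\<lambda>u. - phi (Q u) (e u) (e u))
        = D \<bullet> (Ko *v D) - integral {s..t} k2"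
      using VV hI k1I by simp
    then show "\<bar>V (e t) - V (e s) - integral {s..t} (\<lambda>u. - phi (Q u) (e u) (e u))\<bar> \<le> 3 * sO * Cg^2 * (t - s)^2"
      using DD k2b by (simp add: power2_eq_square)
  qed
  then have VTS: "V (e T) = V (e 0) - S" by (simp add: S_def)
  define M where "M = integral {0..T} Q"
  have Mqf: "v \<bullet> (M *v v) = integral {0..T} (\<lambda>t. v \<bullet> (Q t *v v))" for v
    unfolding M_def by (rule integral_qf[OF Qint, symmetric])
  have Ment: "M$i$j = integral {0..T} (\<lambda>t. Q t$i$j)" for i j
  proof -
    have "M$i = integral {0..T} (\<lambda>t. Q t$i)" unfolding M_def by (rule integral_nth[OF Qint, symmetric])
    also have "\<dots>$j = integral {0..T} (\<lambda>t. Q t$i$j)" by (rule integral_nth[OF integrable_nth[OF Qint], symmetric])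
    finally show ?thesis .
  qed
  have Msym: "transpose M = M"
  proof -
    have "M$j$i = M$i$j" for i j
    proof -
      have "integral {0..T} (\<lambda>t. Q t$j$i) = integral {0..T} (\<lambda>t. Q t$i$j)"
      proof (rule integral_cong)
        fix t assume "t \<in> {0..T}"
        then have "transpose (Q t) = Q t" using Qsym by simp
        then show "Q t$j$i = Q t$i$j" by (metis transpose_def vec_lambda_beta)
      qed
      then show ?thesis by (simp add: Ment)
    qed
    then show ?thesis by (simp add: vec_eq_iff transpose_def)
  qed
  have Mpsd: "0 \<le> v \<bullet> (M *v v)" for v
    unfolding Mqf by (rule integral_nonneg[OF integrable_qf[OF Qint]]) (use Qpsd in auto)
  have Mvar: "\<epsilon> * norm v ^ 2 \<le> v \<bullet> (M *v v)" for v
    by (rule var_lemma[OF Msym Mpsd]) (rule sigma_min_bound[OF assms(11)[folded M_def]])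
  define e0 where "e0 = e 0"
  define a where "a = integral {0..T} (\<lambda>t. phi (Q t) e0 e0)"
  have a_eq: "a = (\<Sum>i\<in>UNIV. blk e0 i \<bullet> (M *v blk e0 i))"
  proof -
    have "a = (\<Sum>i\<in>UNIV. integral {0..T} (\<lambda>t. blk e0 i \<bullet> (Q t *v blk e0 i)))"
      unfolding a_def phi_blk by (rule integral_sum) (auto intro: integrable_qf[OF Qint])
    then show ?thesis by (simp add: Mqf)
  qed
  have a_lb: "\<epsilon> * norm e0 ^ 2 \<le> a"
  proof -
    have "\<epsilon> * norm e0 ^ 2 = (\<Sum>i\<in>UNIV. \<epsilon> * norm (blk e0 i) ^ 2)"
      by (simp add: norm_sq_blk[of e0] sum_distrib_left)
    also have "\<dots> \<le> a" unfolding a_eq by (intro sum_mono Mvar)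
    finally show ?thesis .
  qed
  have cont_const: "continuous_on {0..T} (\<lambda>t. c)" for c :: "real^('p\<times>'n)" by simp
  have a_ub: "a \<le> T * norm e0 ^ 2"
  proof -
    have "a \<le> integral {0..T} (\<lambda>t. norm e0 ^ 2)"
      unfolding a_def
      by (rule integral_le[OF phint[OF cont_const cont_const]]) (use phi_le Qn in auto)
    also have "\<dots> = T * norm e0 ^ 2" using T0 by (simp add: content_real)
    finally show ?thesis .
  qed
  have S0: "0 \<le> S" unfolding S_def
    by (rule integral_nonneg[OF phint[OF econt econt]]) (use phi_nonneg Qpsd in auto)
  have Ssub: "integral {0..t} (\<lambda>u. phi (Q u) (e u) (e u)) \<le> S" if "t \<in> {0..T}" for t
    unfolding S_def
  proof (rule integral_subset_le)
    show "{0..t} \<subseteq> {0..T}" using that by auto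
    show "(\<lambda>u. phi (Q u) (e u) (e u)) integrable_on {0..t}"
      by (rule integrable_on_subinterval[OF phint[OF econt econt]]) (use that in auto)
    show "(\<lambda>u. phi (Q u) (e u) (e u)) integrable_on {0..T}" by (rule phint[OF econt econt])
    show "\<forall>u\<in>{0..T}. 0 \<le> phi (Q u) (e u) (e u)" by (auto intro!: phi_nonneg Qpsd)
  qed
  have GGp: "0 < GG" using GG1 by simp
  have wb: "norm (e t - e 0) ^ 2 \<le> T * GG^2 * S" if t: "t \<in> {0..T}" for t
  proof -
    define w where "w = e t - e 0"
    have wI: "w = integral {0..t} g" unfolding w_def by (rule edif) (use t in auto)
    define w' where "w' = kron (transpose \<Gamma>) (mat 1) *v w"
    have w'n: "norm w' \<le> GG * norm w"
    proof -
      have "norm w' \<le> gG * norm w" unfolding w'_def gG_def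
        by (rule kron_I_left_bound[OF transpose_bound sigma_max_nonneg])
      also have "\<dots> \<le> GG * norm w" by (intro mult_right_mono) (auto simp: GG_def)
      finally show ?thesis .
    qed
    have gst: "g integrable_on {0..t}" by (rule gsub) (use t in auto)
    have ww: "w \<bullet> w = integral {0..t} (\<lambda>u. w \<bullet> g u)"
      using integral_linear[OF gst bounded_linear_inner_right[of w]] wI by (simp add: o_def)
    have wg: "w \<bullet> g u = phi (Q u) w' (e u)" for u
    proof -
      have "w \<bullet> g u = w \<bullet> (kron \<Gamma> (mat 1) *v (kron (mat 1) (Q u) *v e u))"
        by (simp add: ge gsplit matrix_vector_mul_assoc)
      also have "\<dots> = w' \<bullet> (kron (mat 1) (Q u) *v e u)"
        by (simp add: inner_mat_transpose[of w] kron_transpose w'_def)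
      finally show ?thesis by (simp add: phi_def)
    qed
    define mu where "mu = 1 / (T * GG^2)"
    have mu: "0 < mu" using T0 GGp by (simp add: mu_def)
    define P0 where "P0 = integral {0..t} (\<lambda>u. phi (Q u) (e u) (e u))"
    have P0int: "(\<lambda>u. phi (Q u) (e u) (e u)) integrable_on {0..t}"
      by (rule integrable_on_subinterval[OF phint[OF econt econt]]) (use t in auto)
    have "w \<bullet> w \<le> integral {0..t} (\<lambda>u. mu * norm w' ^ 2 / 2 + (1 / (2 * mu)) * phi (Q u) (e u) (e u))"
      unfolding ww
    proof (rule integral_le)
      show "(\<lambda>u. w \<bullet> g u) integrable_on {0..t}"
        using integrable_linear[OF gst bounded_linear_inner_right[of w]] by (simp add: o_def)
      show "(\<lambda>u. mu * norm w' ^ 2 / 2 + (1 / (2 * mu)) * phi (Q u) (e u) (e u)) integrable_on {0..t}"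
        by (intro integrable_add integrable_mult_const P0int) auto
      fix u assume u: "u \<in> {0..t}"
      have u0: "0 \<le> u" using u by simp
      have "2 * phi (Q u) w' (e u) \<le> mu * phi (Q u) w' w' + phi (Q u) (e u) (e u) / mu"
        by (rule phi_amgm[OF Qsym[OF u0] Qpsd[OF u0] mu])
      moreover have "phi (Q u) w' w' \<le> norm w' ^ 2" by (rule phi_le) (rule Qn[OF u0])
      ultimately have "2 * phi (Q u) w' (e u) \<le> mu * norm w' ^ 2 + phi (Q u) (e u) (e u) / mu"
        using mu by (smt (verit) mult_left_mono)
      then show "w \<bullet> g u \<le> mu * norm w' ^ 2 / 2 + (1 / (2 * mu)) * phi (Q u) (e u) (e u)"
        unfolding wg by (simp add: field_simps)
    qed
    also have "\<dots> = t * (mu * norm w' ^ 2 / 2) + (1 / (2 * mu)) * P0"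
    proof -
      have "integral {0..t} (\<lambda>u. mu * norm w' ^ 2 / 2 + (1 / (2 * mu)) * phi (Q u) (e u) (e u))
          = integral {0..t} (\<lambda>u. mu * norm w' ^ 2 / 2) + integral {0..t} (\<lambda>u. (1 / (2 * mu)) * phi (Q u) (e u) (e u))"
        by (rule integral_add[OF _ integrable_mult_const[OF P0int]]) auto
      moreover have "integral {0..t} (\<lambda>u. (1 / (2 * mu)) * phi (Q u) (e u) (e u)) = (1 / (2 * mu)) * P0"
        unfolding P0_def by (rule integral_mult[OF P0int, symmetric])
      moreover have "integral {0..t} (\<lambda>u. mu * norm w' ^ 2 / 2) = t * (mu * norm w' ^ 2 / 2)"
        using t by (simp add: content_real)
      ultimately show ?thesis by linarith
    qed
    also have "\<dots> \<le> T * (mu * (GG^2 * norm w ^ 2) / 2) + (1 / (2 * mu)) * S"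
    proof -
      have "norm w' ^ 2 \<le> (GG * norm w) ^ 2" using w'n by (intro power_mono) auto
      then have a1: "mu * norm w' ^ 2 / 2 \<le> mu * (GG^2 * norm w ^ 2) / 2"
        using mu by (simp add: power_mult_distrib)
      have "t * (mu * norm w' ^ 2 / 2) \<le> T * (mu * (GG^2 * norm w ^ 2) / 2)"
        using t a1 mu by (intro mult_mono) auto
      moreover have "(1 / (2 * mu)) * P0 \<le> (1 / (2 * mu)) * S"
        using Ssub[OF t] mu unfolding P0_def by (intro mult_left_mono) auto
      ultimately show ?thesis by linarith
    qed
    also have "\<dots> = norm w ^ 2 / 2 + T * GG^2 * S / 2"
      using T0 GGp by (simp add: mu_def field_simps power2_eq_square)
    finally have "w \<bullet> w \<le> norm w ^ 2 / 2 + T * GG^2 * S / 2" .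
    then have "norm w ^ 2 \<le> norm w ^ 2 / 2 + T * GG^2 * S / 2" by (simp add: power2_norm_eq_inner)
    then show ?thesis unfolding w_def by simp
  qed
  define lam where "lam = T * GG"
  have lam: "0 < lam" using T0 GGp by (simp add: lam_def)
  define K where "K = (1 + 1 / lam) * (T * GG^2 * S)"
  have pw: "phi (Q u) e0 e0 \<le> (1 + lam) * phi (Q u) (e u) (e u) + K" if u: "u \<in> {0..T}" for u
  proof -
    have u0: "0 \<le> u" using u by simp
    define d where "d = e0 - e u"
    have "phi (Q u) e0 e0 = phi (Q u) (e u + d) (e u + d)" by (simp add: d_def)
    also have "\<dots> = phi (Q u) (e u) (e u) + 2 * phi (Q u) (e u) d + phi (Q u) d d"
      by (rule phi_sq[OF Qsym[OF u0]])
    also have "\<dots> \<le> phi (Q u) (e u) (e u) + (lam * phi (Q u) (e u) (e u) + phi (Q u) d d / lam) + phi (Q u) d d"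
      using phi_amgm[OF Qsym[OF u0] Qpsd[OF u0] lam, of "e u" d] by simp
    also have "\<dots> = (1 + lam) * phi (Q u) (e u) (e u) + (1 + 1 / lam) * phi (Q u) d d"
      by (simp add: algebra_simps)
    also have "\<dots> \<le> (1 + lam) * phi (Q u) (e u) (e u) + K"
    proof -
      have "phi (Q u) d d \<le> norm d ^ 2" by (rule phi_le) (rule Qn[OF u0])
      also have "\<dots> = norm (e u - e 0) ^ 2" by (simp add: d_def e0_def norm_minus_commute)
      also have "\<dots> \<le> T * GG^2 * S" by (rule wb[OF u])
      finally have "phi (Q u) d d \<le> T * GG^2 * S" .
      then have "(1 + 1 / lam) * phi (Q u) d d \<le> K" unfolding K_def using lam
        by (intro mult_left_mono) auto
      then show ?thesis by simp
    qed
    finally show ?thesis .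
  qed
  have a_up: "a \<le> (1 + T * GG)^2 * S"
  proof -
    have "a \<le> integral {0..T} (\<lambda>u. (1 + lam) * phi (Q u) (e u) (e u) + K)"
      unfolding a_def
      by (rule integral_le[OF phint[OF cont_const cont_const]])
         (use pw in \<open>auto intro!: integrable_add integrable_mult_const phint econt\<close>)
    also have "\<dots> = (1 + lam) * S + T * K"
    proof -
      have pe: "(\<lambda>u. phi (Q u) (e u) (e u)) integrable_on {0..T}" by (rule phint[OF econt econt])
      have "integral {0..T} (\<lambda>u. (1 + lam) * phi (Q u) (e u) (e u) + K)
          = integral {0..T} (\<lambda>u. (1 + lam) * phi (Q u) (e u) (e u)) + integral {0..T} (\<lambda>u. K)"
        by (rule integral_add) (auto intro: integrable_mult_const pe)
      moreover have "integral {0..T} (\<lambda>u. (1 + lam) * phi (Q u) (e u) (e u)) = (1 + lam) * S"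
        unfolding S_def by (rule integral_mult[OF pe, symmetric])
      moreover have "integral {0..T} (\<lambda>u. K) = T * K" using T0 by (simp add: content_real)
      ultimately show ?thesis by linarith
    qed
    also have "\<dots> = (1 + T * GG)^2 * S"
      using lam T0 GGp by (simp add: K_def lam_def field_simps power2_eq_square)
    finally show ?thesis .
  qed
  have key: "\<epsilon> * norm e0 ^ 2 \<le> (1 + T * GG)^2 * S" using a_lb a_up by linarith
  have VT': "V (e T) \<le> (1 - delta_eps \<epsilon> T / (sO * GG^3)) * V (e 0)"
  proof (cases "e0 = 0 \<or> sO = 0")
    case True
    then show ?thesis
    proof
      assume "e0 = 0"
      then have "V (e 0) = 0" by (simp add: V_def e0_def)
      then show ?thesis using VTS S0 by simp
    next
      assume "sO = 0"
      then show ?thesis using VTS S0 by simp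
    qed
  next
    case False
    then have e0n: "e0 \<noteq> 0" and sOp: "0 < sO" using sO0 by auto
    have n0: "0 < norm e0 ^ 2" using e0n by simp
    have eT: "\<epsilon> \<le> T"
    proof -
      have "\<epsilon> * norm e0 ^ 2 \<le> T * norm e0 ^ 2" using a_lb a_ub by linarith
      then show ?thesis using n0 by simp
    qed
    define dl where "dl = delta_eps \<epsilon> T"
    have dl0: "0 \<le> dl" using assms(7) T0 by (simp add: dl_def delta_eps_def)
    have num: "dl * (1 + T * GG)^2 \<le> \<epsilon> * GG^3"
      unfolding dl_def by (rule num_lemma[OF assms(7) eT GG1])
    have G3: "0 < GG^3" using GGp by simp
    have "0 < T * GG" using T0 GGp by (rule mult_pos_pos)
    then have tg: "0 < (1 + T * GG)^2" by simp
    have Ve0: "V e0 \<le> sO * norm e0 ^ 2"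
      using absK[of e0 e0] by (simp add: V_def power2_eq_square)
    have "dl * norm e0 ^ 2 * (1 + T * GG)^2 \<le> \<epsilon> * GG^3 * norm e0 ^ 2"
      using num n0 by (simp add: mult_right_mono mult_ac)
    also have "\<dots> \<le> GG^3 * ((1 + T * GG)^2 * S)"
      using key G3 by (simp add: mult_left_mono mult_ac)
    finally have "dl * norm e0 ^ 2 * (1 + T * GG)^2 \<le> (GG^3 * S) * (1 + T * GG)^2" by (simp add: mult_ac)
    then have s1: "dl * norm e0 ^ 2 \<le> GG^3 * S" using tg by simp
    have "dl / (sO * GG^3) * V e0 \<le> dl / (sO * GG^3) * (sO * norm e0 ^ 2)"
      using Ve0 dl0 sOp G3 by (intro mult_left_mono) auto
    also have "\<dots> = dl * norm e0 ^ 2 / GG^3" using sOp by simp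
    also have "\<dots> \<le> S" using s1 G3 by (simp add: divide_le_eq mult.commute)
    finally have "dl / (sO * GG^3) * V e0 \<le> S" .
    then show ?thesis using VTS by (simp add: dl_def e0_def algebra_simps)
  qed
  have GG3: "max 1 (gG ^ 3) = GG ^ 3"
  proof (cases "gG \<le> 1")
    case True
    then have "gG ^ 3 \<le> 1" using gG0 by (simp add: power_le_one)
    then show ?thesis using True by (simp add: GG_def)
  next
    case False
    then have "1 \<le> gG ^ 3" by (simp add: one_le_power)
    then show ?thesis using False by (simp add: GG_def)
  qed
  show ?thesis
    using VT' unfolding Let_def V_def e_def xb_def Ko_def sO_def GG3[unfolded gG_def] by simp
qed

end
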